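(* Let $d>1$ be a square-free integer, let $K=\mathbb{Q}(\sqrt{-d})$, and let $\ell$ be an odd prime. Let $p_1,\dots,p_M$ be $M$ distinct rational primes such that for each $j$: $p_j\nmid 2d$, $p_j$ splits in $K$, and $p_j<\tfrac14 d^{1/(2\ell)}$. Write $p_j\mathcal{O}_K=\mathfrak{p}_j\mathfrak{p}_j^{\sigma}$, where $\sigma$ is the nontrivial automorphism of $K$. Then the ideal classes $[\mathfrak{p}_1],\dots,[\mathfrak{p}_M]$ lie in pairwise distinct cosets of the subgroup $\mathrm{Cl}_K[\ell]$ of $\mathrm{Cl}_K$. Consequently $$|\mathrm{Cl}_K[\ell]|\le \frac{|\mathrm{Cl}_K|}{M}.$$
   Context: For a number field $K$, $\mathrm{Cl}_K$ denotes its ideal class group (fractional ideals modulo principal ideals), a finite abelian group, and for an integer $\ell\ge 2$, $\mathrm{Cl}_K[\ell]=\{[\mathfrak{a}]\in\mathrm{Cl}_K:[\mathfrak{a}]^\ell=\mathrm{Id}\}$ is its $\ell$-torsion subgroup. $\mathcal{O}_K$ is the ring of integers of $K$. *)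

theory Defs
  imports Complex_Main "HOL-Algebra.Coset" "HOL-Computational_Algebra.Squarefree"
begin

text \<open>The ring of integers is Z[omega] with omega = (1 + sqrt(-d))/2 if
-d = 1 mod 4 (i.e. d mod 4 = 3), and omega = sqrt(-d) otherwise.\<close>

definition omega :: "int \<Rightarrow> complex" where
  "omega d = (if d mod 4 = 3 then (1 + \<i> * of_real (sqrt (real_of_int d))) / 2
              else \<i> * of_real (sqrt (real_of_int d)))"

definition OK :: "int \<Rightarrow> complex set" where
  "OK d = {of_int a + of_int b * omega d | a b. True}"

definition is_ideal :: "int \<Rightarrow> complex set \<Rightarrow> bool" where
  "is_ideal d I \<longleftrightarrow> I \<subseteq> OK d \<and> 0 \<in> I \<and> (\<forall>x\<in>I. \<forall>y\<in>I. x + y \<in> I)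
      \<and> (\<forall>r\<in>OK d. \<forall>x\<in>I. r * x \<in> I)"

definition nz_ideal :: "int \<Rightarrow> complex set \<Rightarrow> bool" where
  "nz_ideal d I \<longleftrightarrow> is_ideal d I \<and> I \<noteq> {0}"

definition ideal_mult :: "int \<Rightarrow> complex set \<Rightarrow> complex set \<Rightarrow> complex set" where
  "ideal_mult d I J = \<Inter>{H. is_ideal d H \<and> {x * y | x y. x \<in> I \<and> y \<in> J} \<subseteq> H}"

definition principal_ideal :: "int \<Rightarrow> complex \<Rightarrow> complex set" where
  "principal_ideal d \<alpha> = {r * \<alpha> | r. r \<in> OK d}"

definition prime_ideal :: "int \<Rightarrow> complex set \<Rightarrow> bool" where
  "prime_ideal d P \<longleftrightarrow> nz_ideal d P \<and> P \<noteq> OK d \<and>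
      (\<forall>x\<in>OK d. \<forall>y\<in>OK d. x * y \<in> P \<longrightarrow> x \<in> P \<or> y \<in> P)"

text \<open>Image of an ideal under the nontrivial automorphism sigma (complex conjugation).\<close>
definition conj_ideal :: "complex set \<Rightarrow> complex set" where
  "conj_ideal I = cnj ` I"

text \<open>Equality of ideal classes: I and J differ by a principal fractional ideal,
i.e. alpha I = beta J for nonzero alpha, beta in O_K.\<close>
definition ideal_equiv :: "int \<Rightarrow> complex set \<Rightarrow> complex set \<Rightarrow> bool" where
  "ideal_equiv d I J \<longleftrightarrow> (\<exists>\<alpha> \<beta>. \<alpha> \<in> OK d \<and> \<beta> \<in> OK d \<and> \<alpha> \<noteq> 0 \<and> \<beta> \<noteq> 0 \<and>
       (\<lambda>x. \<alpha> * x) ` I = (\<lambda>x. \<beta> * x) ` J)"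

definition ideal_class :: "int \<Rightarrow> complex set \<Rightarrow> complex set set" where
  "ideal_class d I = {J. nz_ideal d J \<and> ideal_equiv d I J}"

definition class_group :: "int \<Rightarrow> complex set set monoid" where
  "class_group d = \<lparr> carrier = ideal_class d ` {I. nz_ideal d I},
     monoid.mult = (\<lambda>X Y. ideal_class d (ideal_mult d (SOME I. I \<in> X) (SOME J. J \<in> Y))),
     monoid.one = ideal_class d (OK d) \<rparr>"

definition torsion :: "int \<Rightarrow> nat \<Rightarrow> complex set set set" where
  "torsion d l = {x \<in> carrier (class_group d). x [^]\<^bsub>class_group d\<^esub> l = \<one>\<^bsub>class_group d\<^esub>}"

end

theory Submission
  imports Defs
begin

definition tt :: "int \<Rightarrow> int" where "tt d = (if d mod 4 = 3 then 1 else 0)"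
definition nn :: "int \<Rightarrow> int" where "nn d = (if d mod 4 = 3 then (1 + d) div 4 else d)"

locale qf =
  fixes d :: int
  assumes d1: "d > 1" and sf: "squarefree d"
begin

abbreviation "w \<equiv> omega d"
abbreviation "s \<equiv> sqrt (real_of_int d)"

lemma s_sq: "s * s = real_of_int d" using d1 by simp
lemma s_pos: "s > 0" using d1 by simp

lemma Re_w: "Re w = real_of_int (tt d) / 2"
  by (simp add: omega_def tt_def)
lemma Im_w: "Im w = (if d mod 4 = 3 then s / 2 else s)"
  by (simp add: omega_def)
lemma Im_w_pos: "Im w > 0" using s_pos by (simp add: Im_w)
lemma Im_w_sq: "Im w * Im w \<ge> real_of_int d / 4"
proof -
  have "s * s / 4 \<le> s * s" using s_pos by simp
  then show ?thesis using s_sq by (auto simp: Im_w)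
qed

lemma w_sq: "w * w = of_int (tt d) * w - of_int (nn d)"
proof (cases "d mod 4 = 3")
  case True
  have "4 dvd (1 + d)" using True by presburger
  then have n: "real_of_int (nn d) = (1 + real_of_int d) / 4"
    using True by (auto simp: nn_def real_of_int_div)
  show ?thesis using True
    using d1 by (simp add: complex_eq_iff Re_w Im_w n tt_def s_sq) (simp add: field_simps s_sq)
next
  case False
  then show ?thesis
    using d1 by (simp add: complex_eq_iff Re_w Im_w nn_def tt_def s_sq)
qed

lemma cnj_w: "cnj w = of_int (tt d) - w"
  by (simp add: complex_eq_iff Re_w Im_w tt_def)

definition mk :: "int \<Rightarrow> int \<Rightarrow> complex" where "mk a b = of_int a + of_int b * w"

lemma OK_mk: "OK d = range (\<lambda>(a,b). mk a b)"
  by (auto simp: OK_def mk_def)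

lemma in_OK: "z \<in> OK d \<longleftrightarrow> (\<exists>a b. z = mk a b)"
  by (auto simp: OK_def mk_def)

lemma mk_in: "mk a b \<in> OK d" by (auto simp: in_OK)

lemma Im_mk: "Im (mk a b) = of_int b * Im w" by (simp add: mk_def)

lemma mk_inj: "mk a b = mk a' b' \<longleftrightarrow> a = a' \<and> b = b'"
proof
  assume h: "mk a b = mk a' b'"
  then have "Im (mk a b) = Im (mk a' b')" by simp
  then have b: "b = b'" using Im_w_pos by (simp add: Im_mk)
  then show "a = a' \<and> b = b'" using h by (simp add: mk_def)
qed simp

lemma mk_add: "mk a b + mk c e = mk (a + c) (b + e)"
  by (simp add: mk_def algebra_simps)
lemma mk_diff: "mk a b - mk c e = mk (a - c) (b - e)"
  by (simp add: mk_def algebra_simps)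
lemma mk_uminus: "- mk a b = mk (-a) (-b)"
  by (simp add: mk_def algebra_simps)
lemma mk_mult: "mk a b * mk c e = mk (a*c - nn d * b * e) (a*e + b*c + tt d * b * e)"
proof -
  have "mk a b * mk c e = of_int (a*c) + of_int (a*e + b*c) * w + of_int (b*e) * (w*w)"
    by (simp add: mk_def algebra_simps)
  also have "\<dots> = mk (a*c - nn d * b * e) (a*e + b*c + tt d * b * e)"
    by (simp add: w_sq mk_def algebra_simps)
  finally show ?thesis .
qed
lemma mk_cnj: "cnj (mk a b) = mk (a + tt d * b) (- b)"
  by (simp add: mk_def cnj_w algebra_simps)
lemma mk_int: "of_int a = mk a 0" by (simp add: mk_def)
lemma mk_norm: "mk a b * cnj (mk a b) = of_int (a*a + tt d * a * b + nn d * b * b)"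
  by (simp add: mk_cnj mk_mult mk_int mk_inj algebra_simps)

lemma OK_add: "x \<in> OK d \<Longrightarrow> y \<in> OK d \<Longrightarrow> x + y \<in> OK d"
  unfolding in_OK by (metis mk_add)
lemma OK_diff: "x \<in> OK d \<Longrightarrow> y \<in> OK d \<Longrightarrow> x - y \<in> OK d"
  unfolding in_OK by (metis mk_diff)
lemma OK_uminus: "x \<in> OK d \<Longrightarrow> - x \<in> OK d"
  unfolding in_OK by (metis mk_uminus)
lemma OK_mult: "x \<in> OK d \<Longrightarrow> y \<in> OK d \<Longrightarrow> x * y \<in> OK d"
  unfolding in_OK by (metis mk_mult)
lemma OK_cnj: "x \<in> OK d \<Longrightarrow> cnj x \<in> OK d"
  unfolding in_OK by (metis mk_cnj)
lemma OK_int: "of_int a \<in> OK d"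
  by (auto simp: in_OK mk_int)
lemma OK_nat: "of_nat a \<in> OK d"
  using OK_int[of "int a"] by simp
lemma OK_0: "0 \<in> OK d" using OK_int[of 0] by simp
lemma OK_1: "1 \<in> OK d" using OK_int[of 1] by simp

lemma OK_real: "x \<in> OK d \<Longrightarrow> Im x = 0 \<Longrightarrow> \<exists>a. x = of_int a"
  using Im_w_pos by (auto simp: in_OK Im_mk mk_int)

lemma OK_norm_int: "x \<in> OK d \<Longrightarrow> \<exists>k. x * cnj x = of_int k"
  unfolding in_OK using mk_norm by blast

lemma OK_trace_int: "x \<in> OK d \<Longrightarrow> \<exists>k. x + cnj x = of_int k"
proof -
  assume "x \<in> OK d"
  then obtain a b where x: "x = mk a b" by (auto simp: in_OK)
  have "x + cnj x = of_int (2*a + tt d * b)" by (simp add: x mk_cnj mk_add mk_int)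
  then show ?thesis by blast
qed

end

context qf begin

definition sc :: "complex \<Rightarrow> complex set \<Rightarrow> complex set" where
  "sc c I = (\<lambda>x. c * x) ` I"

lemma ideal_sub: "is_ideal d I \<Longrightarrow> I \<subseteq> OK d" by (simp add: is_ideal_def)
lemma ideal_0: "is_ideal d I \<Longrightarrow> 0 \<in> I" by (simp add: is_ideal_def)
lemma ideal_add: "is_ideal d I \<Longrightarrow> x \<in> I \<Longrightarrow> y \<in> I \<Longrightarrow> x + y \<in> I" by (simp add: is_ideal_def)
lemma ideal_mul: "is_ideal d I \<Longrightarrow> r \<in> OK d \<Longrightarrow> x \<in> I \<Longrightarrow> r * x \<in> I" by (simp add: is_ideal_def)
lemma ideal_mul': "is_ideal d I \<Longrightarrow> r \<in> OK d \<Longrightarrow> x \<in> I \<Longrightarrow> x * r \<in> I"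
  using ideal_mul[of I r x] by (simp add: mult.commute)
lemma ideal_neg: "is_ideal d I \<Longrightarrow> x \<in> I \<Longrightarrow> - x \<in> I"
  using ideal_mul[of I "-1" x] OK_int[of "-1"] by simp
lemma ideal_diff: "is_ideal d I \<Longrightarrow> x \<in> I \<Longrightarrow> y \<in> I \<Longrightarrow> x - y \<in> I"
  using ideal_add[of I x "-y"] ideal_neg[of I y] by simp
lemma ideal_int_mul: "is_ideal d I \<Longrightarrow> x \<in> I \<Longrightarrow> of_int k * x \<in> I"
  using ideal_mul OK_int by blast
lemma ideal_in_OK: "is_ideal d I \<Longrightarrow> x \<in> I \<Longrightarrow> x \<in> OK d"
  using ideal_sub by blast

lemma is_ideal_OK: "is_ideal d (OK d)"
  by (simp add: is_ideal_def OK_0 OK_add OK_mult)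

lemma is_idealI:
  assumes "I \<subseteq> OK d" "0 \<in> I" "\<And>x y. x \<in> I \<Longrightarrow> y \<in> I \<Longrightarrow> x + y \<in> I"
    "\<And>r x. r \<in> OK d \<Longrightarrow> x \<in> I \<Longrightarrow> r * x \<in> I"
  shows "is_ideal d I"
  using assms by (simp add: is_ideal_def)

lemma ideal_mult_ideal:
  assumes "I \<subseteq> OK d" "J \<subseteq> OK d"
  shows "is_ideal d (ideal_mult d I J)"
proof -
  let ?F = "{H. is_ideal d H \<and> {x * y | x y. x \<in> I \<and> y \<in> J} \<subseteq> H}"
  have "OK d \<in> ?F" using assms is_ideal_OK by (auto intro: OK_mult)
  then show ?thesis unfolding ideal_mult_def
    by (intro is_idealI) (auto simp: is_ideal_def)
qed

lemma prod_in: "x \<in> I \<Longrightarrow> y \<in> J \<Longrightarrow> x * y \<in> ideal_mult d I J"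
  unfolding ideal_mult_def by blast

lemma ideal_mult_least:
  assumes "is_ideal d H" "\<And>x y. x \<in> I \<Longrightarrow> y \<in> J \<Longrightarrow> x * y \<in> H"
  shows "ideal_mult d I J \<subseteq> H"
  unfolding ideal_mult_def using assms by blast

lemma ideal_mult_comm: "ideal_mult d I J = ideal_mult d J I"
proof -
  have "{x * y | x y. x \<in> I \<and> y \<in> J} = {x * y | x y. x \<in> J \<and> y \<in> I}"
    by (metis mult.commute)
  then show ?thesis unfolding ideal_mult_def by simp
qed

lemma colon_ideal:
  assumes "is_ideal d H" "z \<in> OK d"
  shows "is_ideal d {u \<in> OK d. u * z \<in> H}"
proof (rule is_idealI)
  show "0 \<in> {u \<in> OK d. u * z \<in> H}" using assms OK_0 ideal_0 by auto
  show "\<And>x y. x \<in> {u \<in> OK d. u * z \<in> H} \<Longrightarrow> y \<in> {u \<in> OK d. u * z \<in> H} \<Longrightarrow>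
     x + y \<in> {u \<in> OK d. u * z \<in> H}"
    using assms by (auto simp: distrib_right intro: OK_add ideal_add)
  show "\<And>r x. r \<in> OK d \<Longrightarrow> x \<in> {u \<in> OK d. u * z \<in> H} \<Longrightarrow>
     r * x \<in> {u \<in> OK d. u * z \<in> H}"
    using assms by (auto simp: mult.assoc intro: OK_mult ideal_mul)
qed auto

lemma ideal_mult_sub_OK: "I \<subseteq> OK d \<Longrightarrow> J \<subseteq> OK d \<Longrightarrow> ideal_mult d I J \<subseteq> OK d"
  using ideal_mult_ideal ideal_sub by blast

lemma ideal_mult_assoc_le:
  assumes I: "I \<subseteq> OK d" and J: "J \<subseteq> OK d" and K: "K \<subseteq> OK d"
  shows "ideal_mult d (ideal_mult d I J) K \<subseteq> ideal_mult d I (ideal_mult d J K)"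
proof -
  let ?R = "ideal_mult d I (ideal_mult d J K)"
  have R: "is_ideal d ?R" using I J K by (intro ideal_mult_ideal ideal_mult_sub_OK)
  show ?thesis
  proof (rule ideal_mult_least[OF R])
    fix u z assume u: "u \<in> ideal_mult d I J" and z: "z \<in> K"
    have zOK: "z \<in> OK d" using z K by blast
    have "ideal_mult d I J \<subseteq> {u \<in> OK d. u * z \<in> ?R}"
    proof (rule ideal_mult_least[OF colon_ideal[OF R zOK]])
      fix x y assume "x \<in> I" "y \<in> J"
      then have "x * (y * z) \<in> ?R" using z by (intro prod_in)
      then show "x * y \<in> {u \<in> OK d. u * z \<in> ?R}"
        using \<open>x \<in> I\<close> \<open>y \<in> J\<close> I J by (auto simp: mult.assoc intro: OK_mult)
    qed
    then show "u * z \<in> ?R" using u by blast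
  qed
qed

lemma ideal_mult_assoc:
  assumes I: "I \<subseteq> OK d" and J: "J \<subseteq> OK d" and K: "K \<subseteq> OK d"
  shows "ideal_mult d (ideal_mult d I J) K = ideal_mult d I (ideal_mult d J K)"
proof
  show "ideal_mult d (ideal_mult d I J) K \<subseteq> ideal_mult d I (ideal_mult d J K)"
    using assms by (rule ideal_mult_assoc_le)
  have "ideal_mult d I (ideal_mult d J K) = ideal_mult d (ideal_mult d K J) I"
    by (simp add: ideal_mult_comm)
  also have "\<dots> \<subseteq> ideal_mult d K (ideal_mult d J I)"
    using assms by (intro ideal_mult_assoc_le)
  also have "\<dots> = ideal_mult d (ideal_mult d I J) K"
    by (simp add: ideal_mult_comm)
  finally show "ideal_mult d I (ideal_mult d J K) \<subseteq> ideal_mult d (ideal_mult d I J) K" .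
qed

lemma sc_ideal:
  assumes "is_ideal d H" "c \<in> OK d"
  shows "is_ideal d (sc c H)"
proof (rule is_idealI)
  show "sc c H \<subseteq> OK d" using assms by (auto simp: sc_def intro: OK_mult ideal_in_OK)
  show "0 \<in> sc c H" using assms ideal_0 unfolding sc_def by force
  show "\<And>x y. x \<in> sc c H \<Longrightarrow> y \<in> sc c H \<Longrightarrow> x + y \<in> sc c H"
  proof -
    fix x y assume "x \<in> sc c H" "y \<in> sc c H"
    then obtain x' y' where "x' \<in> H" "y' \<in> H" "x = c * x'" "y = c * y'" by (auto simp: sc_def)
    moreover have "x' + y' \<in> H" using assms calculation ideal_add by blast
    ultimately show "x + y \<in> sc c H" unfolding sc_def by (auto simp: distrib_left[symmetric])
  qed
  show "\<And>r x. r \<in> OK d \<Longrightarrow> x \<in> sc c H \<Longrightarrow> r * x \<in> sc c H"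
  proof -
    fix r x assume "r \<in> OK d" "x \<in> sc c H"
    then obtain y where y: "y \<in> H" "x = c * y" by (auto simp: sc_def)
    then have "r * x = c * (r * y)" by (simp add: algebra_simps)
    then show "r * x \<in> sc c H" using y assms \<open>r \<in> OK d\<close> by (auto simp: sc_def intro: ideal_mul)
  qed
qed

lemma sc_sub: "I \<subseteq> OK d \<Longrightarrow> c \<in> OK d \<Longrightarrow> sc c I \<subseteq> OK d"
  by (auto simp: sc_def intro: OK_mult)

lemma ideal_mult_sc:
  assumes I: "I \<subseteq> OK d" and J: "J \<subseteq> OK d" and c: "c \<in> OK d"
  shows "ideal_mult d (sc c I) J = sc c (ideal_mult d I J)"
proof
  have R: "is_ideal d (sc c (ideal_mult d I J))"
    using assms by (intro sc_ideal ideal_mult_ideal)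
  show "ideal_mult d (sc c I) J \<subseteq> sc c (ideal_mult d I J)"
    by (rule ideal_mult_least[OF R]) (auto simp: sc_def mult.assoc intro!: imageI prod_in)
  have "\<And>H. is_ideal d H \<and> {x * y | x y. x \<in> sc c I \<and> y \<in> J} \<subseteq> H \<Longrightarrow> sc c (ideal_mult d I J) \<subseteq> H"
  proof -
    fix H assume H: "is_ideal d H \<and> {x * y | x y. x \<in> sc c I \<and> y \<in> J} \<subseteq> H"
    have "ideal_mult d I J \<subseteq> {u \<in> OK d. u * c \<in> H}"
    proof (rule ideal_mult_least[OF colon_ideal[OF _ c]])
      show "is_ideal d H" using H by blast
      fix x y assume xy: "x \<in> I" "y \<in> J"
      have "(c * x) * y \<in> H" using H xy by (auto simp: sc_def)
      then show "x * y \<in> {u \<in> OK d. u * c \<in> H}" using xy I J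
        by (auto simp: algebra_simps intro: OK_mult)
    qed
    then show "sc c (ideal_mult d I J) \<subseteq> H" by (auto simp: sc_def mult.commute)
  qed
  then show "sc c (ideal_mult d I J) \<subseteq> ideal_mult d (sc c I) J"
    unfolding ideal_mult_def[of d "sc c I" J] by blast
qed

lemma ideal_mult_sc2:
  assumes I: "I \<subseteq> OK d" and J: "J \<subseteq> OK d" and c: "c \<in> OK d"
  shows "ideal_mult d I (sc c J) = sc c (ideal_mult d I J)"
  using ideal_mult_sc[OF J I c] by (simp add: ideal_mult_comm)

lemma sc_sc: "sc a (sc b I) = sc (a * b) I"
  by (auto simp: sc_def image_image mult.assoc)

lemma sc_1: "sc 1 I = I" by (simp add: sc_def)

lemma ideal_mult_OK: assumes "is_ideal d I" shows "ideal_mult d (OK d) I = I"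
proof
  show "ideal_mult d (OK d) I \<subseteq> I"
    using assms by (intro ideal_mult_least) (auto intro: ideal_mul)
  show "I \<subseteq> ideal_mult d (OK d) I"
    using prod_in[OF OK_1, of _ I] by auto
qed

lemma principal_sc: "principal_ideal d a = sc a (OK d)"
  by (auto simp: principal_ideal_def sc_def mult.commute)

lemma ideal_mult_sub1: "is_ideal d I \<Longrightarrow> J \<subseteq> OK d \<Longrightarrow> ideal_mult d I J \<subseteq> I"
  by (intro ideal_mult_least) (auto intro: ideal_mul')

lemma ideal_mult_sub2: "is_ideal d J \<Longrightarrow> I \<subseteq> OK d \<Longrightarrow> ideal_mult d I J \<subseteq> J"
  by (intro ideal_mult_least) (auto intro: ideal_mul)

lemma ideal_mult_mono: "I \<subseteq> I' \<Longrightarrow> J \<subseteq> J' \<Longrightarrow> ideal_mult d I J \<subseteq> ideal_mult d I' J'"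
  unfolding ideal_mult_def by blast

lemma conj_conj: "conj_ideal (conj_ideal I) = I"
  by (simp add: conj_ideal_def image_image)

lemma conj_sub: "I \<subseteq> OK d \<Longrightarrow> conj_ideal I \<subseteq> OK d"
  by (auto simp: conj_ideal_def intro: OK_cnj)

lemma conj_is_ideal: assumes "is_ideal d I" shows "is_ideal d (conj_ideal I)"
proof (rule is_idealI)
  show "conj_ideal I \<subseteq> OK d" using assms conj_sub ideal_sub by blast
  show "0 \<in> conj_ideal I" using assms ideal_0 unfolding conj_ideal_def by force
  show "\<And>x y. x \<in> conj_ideal I \<Longrightarrow> y \<in> conj_ideal I \<Longrightarrow> x + y \<in> conj_ideal I"
  proof -
    fix x y assume "x \<in> conj_ideal I" "y \<in> conj_ideal I"
    then obtain x' y' where "x' \<in> I" "y' \<in> I" "x = cnj x'" "y = cnj y'" by (auto simp: conj_ideal_def)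
    moreover have "x' + y' \<in> I" using assms calculation ideal_add by blast
    ultimately show "x + y \<in> conj_ideal I" unfolding conj_ideal_def by (metis complex_cnj_add imageI)
  qed
  show "\<And>r x. r \<in> OK d \<Longrightarrow> x \<in> conj_ideal I \<Longrightarrow> r * x \<in> conj_ideal I"
  proof -
    fix r x assume r: "r \<in> OK d" and "x \<in> conj_ideal I"
    then obtain y where y: "y \<in> I" "x = cnj y" by (auto simp: conj_ideal_def)
    then have "r * x = cnj (cnj r * y)" by simp
    moreover have "cnj r * y \<in> I" using y assms r OK_cnj ideal_mul by blast
    ultimately show "r * x \<in> conj_ideal I" unfolding conj_ideal_def by (metis imageI)
  qed
qed

lemma conj_mem: "x \<in> I \<Longrightarrow> cnj x \<in> conj_ideal I"
  by (simp add: conj_ideal_def)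
lemma conj_mem_iff: "cnj x \<in> conj_ideal I \<longleftrightarrow> x \<in> I"
  by (auto simp: conj_ideal_def)

lemma conj_mono: "I \<subseteq> J \<Longrightarrow> conj_ideal I \<subseteq> conj_ideal J"
  by (auto simp: conj_ideal_def)

lemma conj_ideal_mult_le:
  assumes I: "I \<subseteq> OK d" and J: "J \<subseteq> OK d"
  shows "conj_ideal (ideal_mult d I J) \<subseteq> ideal_mult d (conj_ideal I) (conj_ideal J)"
proof -
  have R: "is_ideal d (conj_ideal (ideal_mult d (conj_ideal I) (conj_ideal J)))"
    using assms by (intro conj_is_ideal ideal_mult_ideal conj_sub)
  have "ideal_mult d I J \<subseteq> conj_ideal (ideal_mult d (conj_ideal I) (conj_ideal J))"
  proof (rule ideal_mult_least[OF R])
    fix x y assume "x \<in> I" "y \<in> J"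
    then have "cnj x * cnj y \<in> ideal_mult d (conj_ideal I) (conj_ideal J)"
      by (intro prod_in conj_mem)
    then have "cnj (cnj x * cnj y) \<in> conj_ideal (ideal_mult d (conj_ideal I) (conj_ideal J))"
      by (rule conj_mem)
    then show "x * y \<in> conj_ideal (ideal_mult d (conj_ideal I) (conj_ideal J))"
      by simp
  qed
  then show ?thesis using conj_mono conj_conj by metis
qed

lemma conj_ideal_mult:
  assumes I: "I \<subseteq> OK d" and J: "J \<subseteq> OK d"
  shows "conj_ideal (ideal_mult d I J) = ideal_mult d (conj_ideal I) (conj_ideal J)"
proof
  show "conj_ideal (ideal_mult d I J) \<subseteq> ideal_mult d (conj_ideal I) (conj_ideal J)"
    using assms by (rule conj_ideal_mult_le)
  have "conj_ideal (ideal_mult d (conj_ideal I) (conj_ideal J)) \<subseteq> ideal_mult d I J"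
    using conj_ideal_mult_le[OF conj_sub[OF I] conj_sub[OF J]] by (simp add: conj_conj)
  then show "ideal_mult d (conj_ideal I) (conj_ideal J) \<subseteq> conj_ideal (ideal_mult d I J)"
    using conj_mono conj_conj by metis
qed

lemma conj_sc: "conj_ideal (sc c I) = sc (cnj c) (conj_ideal I)"
  by (auto simp: conj_ideal_def sc_def image_image)

lemma conj_OK: "conj_ideal (OK d) = OK d"
proof
  show "conj_ideal (OK d) \<subseteq> OK d" using conj_sub by blast
  show "OK d \<subseteq> conj_ideal (OK d)"
  proof
    fix x assume "x \<in> OK d"
    then have "cnj x \<in> OK d" by (rule OK_cnj)
    then show "x \<in> conj_ideal (OK d)" using conj_mem by fastforce
  qed
qed

lemma equiv_sc: "ideal_equiv d I J \<longleftrightarrow> (\<exists>\<alpha> \<beta>. \<alpha> \<in> OK d \<and> \<beta> \<in> OK d \<and> \<alpha> \<noteq> 0 \<and> \<beta> \<noteq> 0 \<and> sc \<alpha> I = sc \<beta> J)"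
  by (simp add: ideal_equiv_def sc_def)

lemma equiv_refl: "ideal_equiv d I I"
  unfolding equiv_sc using OK_1 by (intro exI[of _ 1]) auto

lemma equiv_sym: "ideal_equiv d I J \<Longrightarrow> ideal_equiv d J I"
  unfolding equiv_sc by metis

lemma equiv_trans: assumes "ideal_equiv d I J" "ideal_equiv d J K" shows "ideal_equiv d I K"
proof -
  obtain a b where ab: "a \<in> OK d" "b \<in> OK d" "a \<noteq> 0" "b \<noteq> 0" "sc a I = sc b J"
    using assms(1) unfolding equiv_sc by blast
  obtain c e where ce: "c \<in> OK d" "e \<in> OK d" "c \<noteq> 0" "e \<noteq> 0" "sc c J = sc e K"
    using assms(2) unfolding equiv_sc by blast
  have "sc (c * a) I = sc (b * e) K"
  proof -
    have "sc (c * a) I = sc c (sc a I)" by (simp add: sc_sc)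
    also have "\<dots> = sc c (sc b J)" using ab by simp
    also have "\<dots> = sc b (sc c J)" by (simp add: sc_sc mult.commute)
    also have "\<dots> = sc b (sc e K)" using ce by simp
    finally show ?thesis by (simp add: sc_sc)
  qed
  then show ?thesis unfolding equiv_sc using ab ce by (intro exI[of _ "c*a"] exI[of _ "b*e"]) (auto intro: OK_mult)
qed

lemma equiv_sc_self: "c \<in> OK d \<Longrightarrow> c \<noteq> 0 \<Longrightarrow> ideal_equiv d (sc c I) I"
  unfolding equiv_sc using OK_1 by (intro exI[of _ 1] exI[of _ c]) (auto simp: sc_1)

lemma equiv_cong:
  assumes "ideal_equiv d I I'" "I \<subseteq> OK d" "I' \<subseteq> OK d" "J \<subseteq> OK d"
  shows "ideal_equiv d (ideal_mult d I J) (ideal_mult d I' J)"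
proof -
  obtain a b where ab: "a \<in> OK d" "b \<in> OK d" "a \<noteq> 0" "b \<noteq> 0" "sc a I = sc b I'"
    using assms(1) unfolding equiv_sc by blast
  have "sc a (ideal_mult d I J) = sc b (ideal_mult d I' J)"
    using ab assms by (metis ideal_mult_sc)
  then show ?thesis unfolding equiv_sc using ab by blast
qed

lemma equiv_cong2:
  assumes "ideal_equiv d I I'" "ideal_equiv d J J'" "I \<subseteq> OK d" "I' \<subseteq> OK d" "J \<subseteq> OK d" "J' \<subseteq> OK d"
  shows "ideal_equiv d (ideal_mult d I J) (ideal_mult d I' J')"
proof -
  have "ideal_equiv d (ideal_mult d I J) (ideal_mult d I' J)" using assms by (intro equiv_cong)
  moreover have "ideal_equiv d (ideal_mult d J I') (ideal_mult d J' I')" using assms by (intro equiv_cong)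
  then have "ideal_equiv d (ideal_mult d I' J) (ideal_mult d I' J')" by (simp add: ideal_mult_comm)
  ultimately show ?thesis by (rule equiv_trans)
qed

end

lemma four_mul_ne3: "4 * (z::int) \<noteq> 3" by presburger
lemma four_mul_ne1: "4 * (z::int) \<noteq> 1" by presburger
lemma four_mul_ne2: "4 * (z::int) \<noteq> 2" by presburger

lemma oddE2: "odd (z::int) \<Longrightarrow> z = 2 * (z div 2) + 1" by presburger
lemma evenE2: "even (z::int) \<Longrightarrow> z = 2 * (z div 2)" by presburger

context qf begin

lemma not4: "\<not> 4 dvd d"
proof
  assume "4 dvd d"
  then have "(2::int)^2 dvd d" by simp
  then have "(2::int) dvd 1" using sf squarefreeD by blast
  then show False by simp
qed

lemma sq_dvd:
  fixes m c :: int
  assumes m: "m \<noteq> 0" and h: "m^2 dvd d * c^2"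
  shows "m dvd c"
proof -
  define g where "g = gcd m c"
  have g0: "g \<noteq> 0" using m by (simp add: g_def)
  obtain m' c' where mc: "m = m' * g" "c = c' * g" "coprime m' c'"
    using gcd_coprime_exists[of m c] m unfolding g_def by auto
  have "m'^2 * g^2 dvd (d * c'^2) * g^2" using h mc by (simp add: power_mult_distrib ac_simps)
  then have "m'^2 dvd d * c'^2" using g0 dvd_mult_cancel_right[of "m'^2" "g^2" "d * c'^2"] by simp
  moreover have "coprime (m'^2) (c'^2)" using mc by simp
  ultimately have "m'^2 dvd d" using coprime_dvd_mult_left_iff by blast
  then have "m' dvd 1" using sf squarefreeD by blast
  then have "m' dvd c'" by (meson dvd_trans one_dvd)
  then show ?thesis using mc by simp
qed

lemma int_closed:
  fixes m A B :: int
  assumes m: "m > 0" and tr: "m dvd 2*A + tt d * B"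
    and nm: "m^2 dvd A*A + tt d*A*B + nn d*B*B"
  shows "m dvd A \<and> m dvd B"
proof (cases "d mod 4 = 3")
  case True
  then have t: "tt d = 1" by (simp add: tt_def)
  have "4 dvd (1 + d)" using True by presburger
  then have n: "4 * nn d = 1 + d" using True by (auto simp: nn_def)
  obtain k where k: "A*A + A*B + nn d*B*B = m^2 * k" using nm t by (auto elim: dvdE)
  have "(2*A+B)^2 + d * B^2 = 4*A*A + 4*A*B + (1 + d)*B*B" by (simp add: power2_eq_square algebra_simps)
  also have "\<dots> = 4 * (A*A + A*B + nn d*B*B)" unfolding n[symmetric] by (simp add: algebra_simps)
  finally have e4: "(2*A+B)^2 + d * B^2 = 4 * (A*A + A*B + nn d*B*B)" .
  have "m^2 dvd (2*A+B)^2" using tr t by simp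
  moreover have "m^2 dvd 4 * (A*A + A*B + nn d*B*B)" using k by simp
  ultimately have "m^2 dvd 4 * (A*A + A*B + nn d*B*B) - (2*A+B)^2" by (intro dvd_diff)
  also have "4 * (A*A + A*B + nn d*B*B) - (2*A+B)^2 = d * B^2" using e4 by simp
  finally have "m^2 dvd d * B^2" .
  then have mB: "m dvd B" using m sq_dvd[of m B] by simp
  then obtain Y where Y: "B = m * Y" by (auto elim: dvdE)
  obtain Z where Z: "2*A + B = m * Z" using tr t by (auto elim: dvdE)
  have "(2*A+B)^2 = m^2 * Z^2" using Z by (simp add: power_mult_distrib)
  moreover have "d * B^2 = m^2 * (d * Y^2)" using Y by (simp add: power_mult_distrib)
  ultimately have "m^2 * (Z^2 + d * Y^2) = (2*A+B)^2 + d * B^2" by (simp only: distrib_left)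
  also have "\<dots> = m^2 * (4 * k)" using e4 k by simp
  finally have eq: "Z^2 + d * Y^2 = 4 * k" using m by simp
  define e where "e = d div 4"
  have e: "d = 4*e + 3" using True unfolding e_def by presburger
  have "even (Z - Y)"
  proof (rule ccontr)
    assume od: "odd (Z - Y)"
    show False
    proof (cases "even Y")
      case True
      define b where "b = Y div 2"
      have b: "Y = 2*b" using True evenE2 unfolding b_def by blast
      have "odd Z" using od True by simp
      then have a: "Z = 2*(Z div 2) + 1" by (rule oddE2)
      define a where "a = Z div 2"
      have a': "Z = 2*a + 1" using a unfolding a_def .
      have "4 * (k - a*a - a - e*b*b*4 - 3*b*b) = 1" using eq e a' b
        by (simp add: power2_eq_square algebra_simps)
      then show False using four_mul_ne1 by blast
    next
      case False
      define b where "b = Y div 2"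
      have b: "Y = 2*b + 1" using False oddE2 unfolding b_def by blast
      have "even Z" using od False by simp
      define a where "a = Z div 2"
      have a: "Z = 2*a" using \<open>even Z\<close> evenE2 unfolding a_def by blast
      have "4 * (k - a*a - e*(4*b*b+4*b+1) - 3*b*b - 3*b) = 3" using eq e a b
        by (simp add: power2_eq_square algebra_simps)
      then show False using four_mul_ne3 by blast
    qed
  qed
  then obtain X where X: "Z - Y = 2 * X" by blast
  have "2*A = m * (2 * X)" using Y Z X by (simp add: algebra_simps)
  then have "A = m * X" by simp
  then show ?thesis using mB by simp
next
  case False
  then have t: "tt d = 0" and n: "nn d = d" by (simp_all add: tt_def nn_def)
  have d12: "d mod 4 = 1 \<or> d mod 4 = 2" using False not4 by presburger
  obtain k where k: "A*A + d*B*B = m^2 * k" using nm t n by (auto elim: dvdE)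
  have "m^2 dvd (2*A)^2" using tr t dvd_power_same[of m "2*A" 2] by simp
  moreover have "m^2 dvd 4 * (A*A + d*B*B)" using k by simp
  moreover have "4 * (A*A + d*B*B) = (2*A)^2 + d*(2*B)^2" by (simp add: power2_eq_square algebra_simps)
  ultimately have "m^2 dvd 4 * (A*A + d*B*B) - (2*A)^2" by (intro dvd_diff)
  also have "4 * (A*A + d*B*B) - (2*A)^2 = d * (2*B)^2" by (simp add: power2_eq_square algebra_simps)
  finally have "m^2 dvd d * (2*B)^2" .
  then have "m dvd 2*B" using m sq_dvd[of m "2*B"] by simp
  then obtain Y where Y: "2*B = m * Y" by (auto elim: dvdE)
  obtain X where X: "2*A = m * X" using tr t by (auto elim: dvdE)
  have "m^2 * (X^2 + d * Y^2) = (2*A)^2 + d*(2*B)^2"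
    unfolding X Y by (simp add: power_mult_distrib algebra_simps)
  also have "\<dots> = m^2 * (4 * k)" using k by (simp add: power2_eq_square algebra_simps)
  finally have eq: "X^2 + d * Y^2 = 4 * k" using m by simp
  define e where "e = d div 4"
  define r where "r = d mod 4"
  have e: "d = 4*e + r" unfolding e_def r_def by simp
  have r12: "r = 1 \<or> r = 2" using d12 unfolding r_def .
  have ev: "even X \<and> even Y"
  proof (cases "even Y")
    case True
    define b where "b = Y div 2"
    have b: "Y = 2*b" using True evenE2 unfolding b_def by blast
    show ?thesis
    proof (rule ccontr)
      assume "\<not> (even X \<and> even Y)"
      then have "odd X" using True by blast
      define a where "a = X div 2"
      have a: "X = 2*a + 1" using \<open>odd X\<close> oddE2 unfolding a_def by blast
      have "4 * (k - a*a - a - d*b*b) = 1" using eq a b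
        by (simp add: power2_eq_square algebra_simps)
      then show False using four_mul_ne1 by blast
    qed
  next
    case False
    define b where "b = Y div 2"
    have b: "Y = 2*b + 1" using False oddE2 unfolding b_def by blast
    show ?thesis
    proof (cases "even X")
      case True
      define a where "a = X div 2"
      have a: "X = 2*a" using True evenE2 unfolding a_def by blast
      have "4 * (k - a*a - e*(4*b*b+4*b+1) - r*(b*b+b)) = r" using eq a b e
        by (simp add: power2_eq_square algebra_simps)
      then show ?thesis using r12 four_mul_ne1 four_mul_ne2 by metis
    next
      case False
      define a where "a = X div 2"
      have a: "X = 2*a + 1" using False oddE2 unfolding a_def by blast
      have "4 * (k - a*a - a - e*(4*b*b+4*b+1) - r*(b*b+b)) = 1 + r" using eq a b e
        by (simp add: power2_eq_square algebra_simps)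
      then show ?thesis using r12 four_mul_ne2 four_mul_ne3 by (metis add.commute one_add_one numeral_plus_one numeral_Bit1 numeral_One)
    qed
  qed
  then obtain X' Y' where "X = 2*X'" "Y = 2*Y'" by blast
  then have "A = m * X'" "B = m * Y'" using X Y by simp_all
  then show ?thesis by simp
qed

end

context qf begin

lemma cnj_mult_pos: "x \<noteq> 0 \<Longrightarrow> x * cnj x = of_int k \<Longrightarrow> k > 0"
proof -
  assume x: "x \<noteq> 0" and k: "x * cnj x = of_int k"
  have "x * cnj x = of_real ((cmod x)^2)" by (metis complex_norm_square of_real_power)
  then have "real_of_int k = (cmod x)^2" using k by (metis of_real_eq_iff of_real_of_int_eq)
  moreover have "(cmod x)^2 > 0" using x by simp
  ultimately show "k > 0" by linarith
qed

lemma conj_mem': "y \<in> conj_ideal I \<Longrightarrow> cnj y \<in> I"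
  by (auto simp: conj_ideal_def)

lemma norm_ideal:
  assumes I: "is_ideal d I" and x0: "x0 \<in> I" "x0 \<noteq> 0"
  shows "\<exists>m::int. m > 0 \<and> ideal_mult d I (conj_ideal I) = sc (of_int m) (OK d)"
proof -
  define P where "P = ideal_mult d I (conj_ideal I)"
  have IOK: "I \<subseteq> OK d" using I ideal_sub by blast
  have cIOK: "conj_ideal I \<subseteq> OK d" using conj_sub[OF IOK] .
  have Pid: "is_ideal d P" unfolding P_def using IOK cIOK by (rule ideal_mult_ideal)
  have key: "\<And>x y. x \<in> I \<Longrightarrow> y \<in> conj_ideal I \<Longrightarrow> x * y \<in> P" unfolding P_def by (rule prod_in)
  have normP: "\<And>x. x \<in> I \<Longrightarrow> x * cnj x \<in> P" using key conj_mem by blast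
  obtain k0 where k0: "x0 * cnj x0 = of_int k0" using OK_norm_int x0 IOK by blast
  have k0pos: "k0 > 0" using cnj_mult_pos[OF x0(2) k0] .
  define S where "S = {n::nat. n > 0 \<and> of_nat n \<in> P}"
  have "of_nat (nat k0) = (of_int k0 :: complex)" using k0pos by simp
  then have "nat k0 \<in> S" unfolding S_def using k0pos normP[OF x0(1)] k0 by simp
  define m0 where "m0 = (LEAST n. n \<in> S)"
  have m0S: "m0 \<in> S" unfolding m0_def using \<open>nat k0 \<in> S\<close> by (rule LeastI)
  define m where "m = int m0"
  have mpos: "m > 0" using m0S unfolding m_def S_def by simp
  have mP: "of_int m \<in> P" using m0S unfolding m_def S_def by simp
  have mdvd: "m dvd k" if kP: "of_int k \<in> P" for k
  proof -
    define r where "r = k mod m"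
    have "r = k - (k div m) * m" unfolding r_def by (simp add: minus_div_mult_eq_mod)
    then have "of_int r = of_int k - of_int (k div m) * (of_int m :: complex)" by simp
    moreover have "of_int k - of_int (k div m) * (of_int m :: complex) \<in> P"
      using ideal_diff[OF Pid kP ideal_int_mul[OF Pid mP]] .
    ultimately have rP: "of_int r \<in> P" by simp
    have r0: "0 \<le> r" "r < m" unfolding r_def using mpos by simp_all
    have "r = 0"
    proof (rule ccontr)
      assume "r \<noteq> 0"
      then have "nat r \<in> S" unfolding S_def using r0 rP by simp
      then have "m0 \<le> nat r" unfolding m0_def by (rule Least_le)
      then show False using r0 unfolding m_def by simp
    qed
    then show ?thesis unfolding r_def by presburger
  qed
  have sub1: "P \<subseteq> sc (of_int m) (OK d)"
    unfolding P_def
  proof (rule ideal_mult_least[OF sc_ideal[OF is_ideal_OK OK_int]])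
    fix x y assume x: "x \<in> I" and y: "y \<in> conj_ideal I"
    have xOK: "x \<in> OK d" and yOK: "y \<in> OK d" using x y IOK cIOK by auto
    then have "x * y \<in> OK d" by (rule OK_mult)
    then obtain A B where AB: "x * y = mk A B" by (auto simp: in_OK)
    have tr: "x * y + cnj (x * y) = of_int (2*A + tt d * B)"
      unfolding AB by (simp add: mk_cnj mk_add mk_int)
    have "cnj (x * y) = cnj y * cnj x" by simp
    moreover have "cnj y * cnj x \<in> P" using key[OF conj_mem'[OF y] conj_mem[OF x]] .
    ultimately have "x * y + cnj (x * y) \<in> P" using ideal_add[OF Pid key[OF x y]] by (simp add: mult.commute)
    then have d1: "m dvd 2*A + tt d * B" using tr mdvd by simp
    obtain k1 where k1: "x * cnj x = of_int k1" using OK_norm_int xOK by blast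
    obtain k2 where k2: "y * cnj y = of_int k2" using OK_norm_int yOK by blast
    have "m dvd k1" using mdvd[of k1] normP[OF x] k1 by simp
    moreover have "cnj y * y \<in> P" using key[OF conj_mem'[OF y] y] .
    then have "m dvd k2" using mdvd[of k2] k2 by (simp add: mult.commute)
    ultimately have "m * m dvd k1 * k2" by (rule mult_dvd_mono)
    moreover have "of_int (A*A + tt d * A * B + nn d * B * B) = (of_int (k1 * k2) :: complex)"
    proof -
      have "of_int (A*A + tt d * A * B + nn d * B * B) = (x*y) * cnj (x*y)"
        unfolding AB by (rule mk_norm[symmetric])
      also have "\<dots> = (x * cnj x) * (y * cnj y)" by simp
      finally show ?thesis using k1 k2 by simp
    qed
    then have "A*A + tt d * A * B + nn d * B * B = k1 * k2" using of_int_eq_iff by blast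
    ultimately have d2: "m^2 dvd A*A + tt d * A * B + nn d * B * B" by (simp add: power2_eq_square)
    obtain A' B' where A': "A = m * A'" and B': "B = m * B'"
      using int_closed[OF mpos d1 d2] by (auto elim!: dvdE)
    have "x * y = of_int m * mk A' B'" unfolding AB A' B' by (simp add: mk_def algebra_simps)
    then show "x * y \<in> sc (of_int m) (OK d)" by (auto simp: sc_def intro: mk_in)
  qed
  have sub2: "sc (of_int m) (OK d) \<subseteq> P"
  proof
    fix z assume "z \<in> sc (of_int m) (OK d)"
    then obtain r where r: "r \<in> OK d" "z = of_int m * r" by (auto simp: sc_def)
    then show "z \<in> P" using ideal_mul[OF Pid r(1) mP] by (simp add: mult.commute)
  qed
  show ?thesis using sub1 sub2 mpos unfolding P_def by blast
qed

lemma nz_ex: "nz_ideal d I \<Longrightarrow> \<exists>x\<in>I. x \<noteq> 0"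
  unfolding nz_ideal_def using ideal_0 by blast

lemma nz_idealI: "is_ideal d I \<Longrightarrow> x \<in> I \<Longrightarrow> x \<noteq> 0 \<Longrightarrow> nz_ideal d I"
  unfolding nz_ideal_def by blast

lemma nz_ideal_is: "nz_ideal d I \<Longrightarrow> is_ideal d I" unfolding nz_ideal_def by blast
lemma nz_sub: "nz_ideal d I \<Longrightarrow> I \<subseteq> OK d" using nz_ideal_is ideal_sub by blast

lemma nz_OK: "nz_ideal d (OK d)" using nz_idealI[OF is_ideal_OK OK_1] by simp

lemma nz_conj: assumes "nz_ideal d I" shows "nz_ideal d (conj_ideal I)"
proof -
  obtain x where "x \<in> I" "x \<noteq> 0" using nz_ex assms by blast
  then show ?thesis using nz_idealI[OF conj_is_ideal[OF nz_ideal_is[OF assms]] conj_mem] by simp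
qed

lemma nz_mult: assumes "nz_ideal d I" "nz_ideal d J" shows "nz_ideal d (ideal_mult d I J)"
proof -
  obtain x where "x \<in> I" "x \<noteq> 0" using nz_ex assms by blast
  moreover obtain y where "y \<in> J" "y \<noteq> 0" using nz_ex assms by blast
  ultimately show ?thesis
    using nz_idealI[OF ideal_mult_ideal[OF nz_sub[OF assms(1)] nz_sub[OF assms(2)]] prod_in[of x I y J]] by simp
qed

lemma inv_equiv: assumes "nz_ideal d I"
  shows "ideal_equiv d (ideal_mult d I (conj_ideal I)) (OK d)"
proof -
  obtain x where "x \<in> I" "x \<noteq> 0" using nz_ex assms by blast
  then obtain m :: int where "m > 0" "ideal_mult d I (conj_ideal I) = sc (of_int m) (OK d)"
    using norm_ideal nz_ideal_is[OF assms] by blast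
  then show ?thesis using equiv_sc_self[OF OK_int, of m "OK d"] by simp
qed

abbreviation "G \<equiv> class_group d"

lemma carrier_G: "carrier G = ideal_class d ` {I. nz_ideal d I}"
  by (simp add: class_group_def)

lemma one_G: "\<one>\<^bsub>G\<^esub> = ideal_class d (OK d)"
  by (simp add: class_group_def)

lemma mult_G_def: "X \<otimes>\<^bsub>G\<^esub> Y = ideal_class d (ideal_mult d (SOME I. I \<in> X) (SOME J. J \<in> Y))"
  by (simp add: class_group_def)

lemma class_eq:
  assumes "nz_ideal d I" "nz_ideal d J"
  shows "ideal_class d I = ideal_class d J \<longleftrightarrow> ideal_equiv d I J"
proof
  assume "ideal_class d I = ideal_class d J"
  moreover have "J \<in> ideal_class d J" using assms equiv_refl by (simp add: ideal_class_def)
  ultimately have "J \<in> ideal_class d I" by simp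
  then show "ideal_equiv d I J" by (simp add: ideal_class_def)
next
  assume "ideal_equiv d I J"
  then show "ideal_class d I = ideal_class d J"
    unfolding ideal_class_def using equiv_sym equiv_trans by blast
qed

lemma class_self: "nz_ideal d I \<Longrightarrow> I \<in> ideal_class d I"
  using equiv_refl by (simp add: ideal_class_def)

lemma some_class:
  assumes "nz_ideal d I"
  shows "nz_ideal d (SOME K. K \<in> ideal_class d I) \<and> ideal_equiv d I (SOME K. K \<in> ideal_class d I)"
proof -
  have "(SOME K. K \<in> ideal_class d I) \<in> ideal_class d I" using class_self[OF assms] by (rule someI)
  then show ?thesis by (simp add: ideal_class_def)
qed

lemma mult_class:
  assumes I: "nz_ideal d I" and J: "nz_ideal d J"
  shows "ideal_class d I \<otimes>\<^bsub>G\<^esub> ideal_class d J = ideal_class d (ideal_mult d I J)"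
proof -
  define I0 where "I0 = (SOME K. K \<in> ideal_class d I)"
  define J0 where "J0 = (SOME K. K \<in> ideal_class d J)"
  have I0: "nz_ideal d I0" "ideal_equiv d I I0" using some_class[OF I] unfolding I0_def by auto
  have J0: "nz_ideal d J0" "ideal_equiv d J J0" using some_class[OF J] unfolding J0_def by auto
  have "ideal_equiv d (ideal_mult d I0 J0) (ideal_mult d I J)"
    using equiv_cong2[OF equiv_sym[OF I0(2)] equiv_sym[OF J0(2)]] I0 J0 I J nz_sub by blast
  then have "ideal_class d (ideal_mult d I0 J0) = ideal_class d (ideal_mult d I J)"
    using class_eq nz_mult I0 J0 I J by blast
  then show ?thesis unfolding mult_G_def I0_def J0_def by simp
qed

lemma carrier_E:
  assumes "X \<in> carrier G" obtains I where "nz_ideal d I" "X = ideal_class d I"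
  using assms carrier_G by auto

lemma class_in: "nz_ideal d I \<Longrightarrow> ideal_class d I \<in> carrier G"
  by (simp add: carrier_G)

lemma G_comm_group: "comm_group G"
proof (rule comm_groupI)
  show "\<one>\<^bsub>G\<^esub> \<in> carrier G" using one_G class_in nz_OK by simp
next
  fix X Y assume "X \<in> carrier G" "Y \<in> carrier G"
  then obtain I J where "nz_ideal d I" "X = ideal_class d I" "nz_ideal d J" "Y = ideal_class d J"
    by (metis carrier_E)
  then show "X \<otimes>\<^bsub>G\<^esub> Y \<in> carrier G" using mult_class class_in nz_mult by simp
next
  fix X Y Z assume "X \<in> carrier G" "Y \<in> carrier G" "Z \<in> carrier G"
  then obtain I J K where IJK: "nz_ideal d I" "X = ideal_class d I" "nz_ideal d J" "Y = ideal_class d J"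
     "nz_ideal d K" "Z = ideal_class d K"
    by (metis carrier_E)
  then show "X \<otimes>\<^bsub>G\<^esub> Y \<otimes>\<^bsub>G\<^esub> Z = X \<otimes>\<^bsub>G\<^esub> (Y \<otimes>\<^bsub>G\<^esub> Z)"
    using mult_class nz_mult ideal_mult_assoc nz_sub by simp
next
  fix X Y assume "X \<in> carrier G" "Y \<in> carrier G"
  then obtain I J where "nz_ideal d I" "X = ideal_class d I" "nz_ideal d J" "Y = ideal_class d J"
    by (metis carrier_E)
  then show "X \<otimes>\<^bsub>G\<^esub> Y = Y \<otimes>\<^bsub>G\<^esub> X" using mult_class ideal_mult_comm by metis
next
  fix X assume "X \<in> carrier G"
  then obtain I where I: "nz_ideal d I" "X = ideal_class d I" by (metis carrier_E)
  then show "\<one>\<^bsub>G\<^esub> \<otimes>\<^bsub>G\<^esub> X = X"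
    using mult_class[OF nz_OK I(1)] ideal_mult_OK[OF nz_ideal_is[OF I(1)]] one_G by simp
next
  fix X assume "X \<in> carrier G"
  then obtain I where I: "nz_ideal d I" "X = ideal_class d I" by (metis carrier_E)
  have "ideal_class d (conj_ideal I) \<otimes>\<^bsub>G\<^esub> X = ideal_class d (ideal_mult d I (conj_ideal I))"
    using mult_class[OF nz_conj[OF I(1)] I(1)] I(2) ideal_mult_comm by simp
  also have "\<dots> = \<one>\<^bsub>G\<^esub>" using class_eq[OF nz_mult[OF I(1) nz_conj[OF I(1)]] nz_OK] inv_equiv[OF I(1)] one_G
    by simp
  finally show "\<exists>Y\<in>carrier G. Y \<otimes>\<^bsub>G\<^esub> X = \<one>\<^bsub>G\<^esub>" using class_in nz_conj I(1) by blast
qed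

end

lemma dirichlet1:
  fixes \<theta> :: real and N :: nat
  assumes N: "N > 0"
  shows "\<exists>k::nat. \<exists>h::int. 0 < k \<and> k \<le> N \<and> \<bar>real k * \<theta> - of_int h\<bar> < 1 / real N"
proof -
  define g where "g k = real k * \<theta> - of_int \<lfloor>real k * \<theta>\<rfloor>" for k :: nat
  have g01: "0 \<le> g k" "g k < 1" for k unfolding g_def by linarith+
  define f where "f k = nat \<lfloor>real N * g k\<rfloor>" for k
  have fr: "f k \<in> {0..<N}" for k
  proof -
    have "real N * g k < real N" using g01[of k] N by simp
    then have "\<lfloor>real N * g k\<rfloor> < int N" by (simp add: floor_less_iff)
    moreover have "0 \<le> \<lfloor>real N * g k\<rfloor>" using g01[of k] by simp
    ultimately show ?thesis unfolding f_def by (simp add: nat_less_iff)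
  qed
  have "\<not> inj_on f {0..N}"
  proof
    assume "inj_on f {0..N}"
    then have "card (f ` {0..N}) = card {0..N}" by (rule card_image)
    moreover have "card (f ` {0..N}) \<le> card {0..<N}" using fr by (intro card_mono) auto
    ultimately show False by simp
  qed
  then obtain k1 k2 where k: "k1 \<in> {0..N}" "k2 \<in> {0..N}" "k1 \<noteq> k2" "f k1 = f k2"
    unfolding inj_on_def by blast
  have main: "\<exists>k::nat. \<exists>h::int. 0 < k \<and> k \<le> N \<and> \<bar>real k * \<theta> - of_int h\<bar> < 1 / real N"
    if "a < b" "a \<in> {0..N}" "b \<in> {0..N}" "f a = f b" for a b
  proof -
    have fl: "\<lfloor>real N * g a\<rfloor> = \<lfloor>real N * g b\<rfloor>" using that(4) g01 unfolding f_def
      by (metis nat_eq_iff2 mult_nonneg_nonneg of_nat_0_le_iff zero_le_floor)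
    have "\<bar>real N * g b - real N * g a\<bar> < 1" using fl by linarith
    then have "real N * \<bar>g b - g a\<bar> < 1" by (simp add: abs_mult right_diff_distrib[symmetric])
    then have lt: "\<bar>g b - g a\<bar> < 1 / real N" using N by (simp add: field_simps)
    have "g b - g a = real (b - a) * \<theta> - of_int (\<lfloor>real b * \<theta>\<rfloor> - \<lfloor>real a * \<theta>\<rfloor>)"
      using that(1) unfolding g_def by (simp add: of_nat_diff algebra_simps)
    then show ?thesis using lt that by (intro exI[of _ "b - a"] exI[of _ "\<lfloor>real b * \<theta>\<rfloor> - \<lfloor>real a * \<theta>\<rfloor>"]) auto
  qed
  show ?thesis
  proof (cases "k1 < k2")
    case True then show ?thesis using main k by blast
  next
    case False then have "k2 < k1" using k(3) by simp
    then show ?thesis using main k by metis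
  qed
qed

context qf begin

definition QQ :: nat where "QQ = nat \<lceil>2 * Im w\<rceil> + 1"

lemma QQ_pos: "QQ > 0" by (simp add: QQ_def)
lemma QQ_big: "Im w / real QQ < 1/2"
proof -
  have "2 * Im w \<le> real (nat \<lceil>2 * Im w\<rceil>)" by linarith
  then have "2 * Im w < real QQ" by (simp add: QQ_def)
  then show ?thesis using QQ_pos by (simp add: field_simps)
qed

lemma approx: "\<exists>t::nat. \<exists>r. 0 < t \<and> t \<le> QQ \<and> r \<in> OK d \<and> cmod (of_nat t * z - r) < 1"
proof -
  define y1 where "y1 = Im z / Im w"
  obtain k h where kh: "0 < k" "k \<le> QQ" "\<bar>real k * y1 - of_int h\<bar> < 1 / real QQ"
    using dirichlet1[OF QQ_pos, of y1] by blast
  define u where "u = of_nat k * z - of_int h * w"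
  have Imu: "Im u = (real k * y1 - of_int h) * Im w" unfolding u_def y1_def using Im_w_pos
    by (simp add: field_simps)
  have "\<bar>Im u\<bar> < Im w / real QQ"
  proof -
    have "\<bar>Im u\<bar> = \<bar>real k * y1 - of_int h\<bar> * Im w" using Imu Im_w_pos by (simp add: abs_mult)
    also have "\<dots> < 1 / real QQ * Im w" using kh(3) Im_w_pos by (intro mult_strict_right_mono) auto
    finally show ?thesis by simp
  qed
  then have Imu2: "\<bar>Im u\<bar> < 1/2" using QQ_big by linarith
  define a where "a = \<lfloor>Re u + 1/2\<rfloor>"
  have Reu: "\<bar>Re u - of_int a\<bar> \<le> 1/2" unfolding a_def by linarith
  define r where "r = mk a h"
  have v: "of_nat k * z - r = u - of_int a" unfolding u_def r_def mk_def by simp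
  have "(cmod (u - of_int a))^2 = (Re u - of_int a)^2 + (Im u)^2" by (simp add: cmod_power2)
  also have "\<dots> < 1/4 + 1/4"
  proof (rule add_le_less_mono)
    have "(Re u - of_int a)^2 \<le> (1/2)^2" using Reu power2_le_iff_abs_le[of "1/2" "Re u - of_int a"] by simp
    then show "(Re u - of_int a)^2 \<le> 1/4" by (simp add: power2_eq_square)
    have "\<bar>Im u\<bar> * \<bar>Im u\<bar> < 1/2 * (1/2)" using Imu2 by (intro mult_strict_mono) auto
    then show "(Im u)^2 < 1/4" by (simp add: power2_eq_square abs_mult_self_eq)
  qed
  finally have "(cmod (u - of_int a))^2 < 1" by simp
  then have "cmod (u - of_int a) < 1" by (simp add: power_less_one_iff abs_square_less_1)
  then show ?thesis using v kh mk_in[of a h] by (intro exI[of _ k] exI[of _ "mk a h"]) (auto simp: r_def)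
qed

end

context qf begin

lemma norm_nat: "x \<in> OK d \<Longrightarrow> \<exists>n::nat. (cmod x)^2 = real n"
proof -
  assume "x \<in> OK d"
  then obtain k where k: "x * cnj x = of_int k" using OK_norm_int by blast
  have "x * cnj x = of_real ((cmod x)^2)" by (metis complex_norm_square of_real_power)
  then have "real_of_int k = (cmod x)^2" using k by (metis of_real_eq_iff of_real_of_int_eq)
  moreover have "0 \<le> (cmod x)^2" by simp
  ultimately have "0 \<le> k" by linarith
  then have "(cmod x)^2 = real (nat k)" using \<open>real_of_int k = (cmod x)^2\<close> by simp
  then show ?thesis by blast
qed

lemma reduce:
  assumes I: "nz_ideal d I"
  shows "\<exists>K. is_ideal d K \<and> of_nat (fact QQ) \<in> K \<and> ideal_equiv d I K"
proof -
  have Iid: "is_ideal d I" using I nz_ideal_is by blast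
  have IOK: "I \<subseteq> OK d" using I nz_sub by blast
  define E where "E n = (\<exists>x\<in>I. x \<noteq> 0 \<and> (cmod x)^2 = real n)" for n
  obtain x0 where x0: "x0 \<in> I" "x0 \<noteq> 0" using nz_ex I by blast
  obtain n1 where "(cmod x0)^2 = real n1" using norm_nat x0 IOK by blast
  then have "E n1" unfolding E_def using x0 by blast
  define n0 where "n0 = (LEAST n. E n)"
  have "E n0" unfolding n0_def using \<open>E n1\<close> by (rule LeastI)
  then obtain \<alpha> where \<alpha>: "\<alpha> \<in> I" "\<alpha> \<noteq> 0" "(cmod \<alpha>)^2 = real n0" unfolding E_def by blast
  have \<alpha>OK: "\<alpha> \<in> OK d" using \<alpha> IOK by blast
  define h :: complex where "h = of_nat (fact QQ)"
  have hOK: "h \<in> OK d" unfolding h_def by (rule OK_nat)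
  have h0: "h \<noteq> 0" unfolding h_def by simp
  have key: "\<exists>r\<in>OK d. h * x = \<alpha> * r" if x: "x \<in> I" for x
  proof -
    obtain t r where tr: "0 < t" "t \<le> QQ" "r \<in> OK d" "cmod (of_nat t * (x / \<alpha>) - r) < 1"
      using approx by blast
    define v where "v = of_nat t * x - r * \<alpha>"
    have vI: "v \<in> I" unfolding v_def
      using ideal_diff[OF Iid ideal_mul[OF Iid OK_nat x] ideal_mul[OF Iid tr(3) \<alpha>(1)]] .
    have "v = \<alpha> * (of_nat t * (x / \<alpha>) - r)" unfolding v_def using \<alpha>(2) by (simp add: field_simps)
    then have "cmod v = cmod \<alpha> * cmod (of_nat t * (x / \<alpha>) - r)" by (simp add: norm_mult)
    also have "\<dots> < cmod \<alpha>" using tr(4) \<alpha>(2) by simp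
    finally have lt: "cmod v < cmod \<alpha>" .
    have v0: "v = 0"
    proof (rule ccontr)
      assume "v \<noteq> 0"
      obtain n' where n': "(cmod v)^2 = real n'" using norm_nat vI IOK by blast
      then have "E n'" unfolding E_def using vI \<open>v \<noteq> 0\<close> by blast
      then have "n0 \<le> n'" unfolding n0_def by (rule Least_le)
      moreover have "(cmod v)^2 < (cmod \<alpha>)^2" using lt by (simp add: power_strict_mono)
      ultimately show False using n' \<alpha>(3) by simp
    qed
    then have tx: "of_nat t * x = r * \<alpha>" unfolding v_def by simp
    have "t dvd fact QQ" using tr by (simp add: dvd_fact)
    then obtain q where q: "fact QQ = t * q" by (auto elim: dvdE)
    have "h * x = of_nat q * (of_nat t * x)" unfolding h_def q by simp
    also have "\<dots> = \<alpha> * (of_nat q * r)" using tx by simp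
    finally show ?thesis using OK_mult[OF OK_nat tr(3)] by blast
  qed
  define K where "K = (\<lambda>x. h * x / \<alpha>) ` I"
  have KOK: "K \<subseteq> OK d"
  proof
    fix y assume "y \<in> K"
    then obtain x where x: "x \<in> I" "y = h * x / \<alpha>" unfolding K_def by blast
    obtain r where "r \<in> OK d" "h * x = \<alpha> * r" using key[OF x(1)] by blast
    then show "y \<in> OK d" using x \<alpha>(2) by simp
  qed
  have Kid: "is_ideal d K"
  proof (rule is_idealI[OF KOK])
    show "0 \<in> K" unfolding K_def using ideal_0[OF Iid] by force
    fix y1 y2 assume "y1 \<in> K" "y2 \<in> K"
    then obtain x1 x2 where "x1 \<in> I" "x2 \<in> I" "y1 = h * x1 / \<alpha>" "y2 = h * x2 / \<alpha>" unfolding K_def by blast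
    moreover have "x1 + x2 \<in> I" using calculation ideal_add[OF Iid] by blast
    moreover have "y1 + y2 = h * (x1 + x2) / \<alpha>" using calculation by (simp add: add_divide_distrib distrib_left)
    ultimately show "y1 + y2 \<in> K" unfolding K_def by blast
  next
    fix r y assume r: "r \<in> OK d" and "y \<in> K"
    then obtain x where x: "x \<in> I" "y = h * x / \<alpha>" unfolding K_def by blast
    have "r * x \<in> I" using ideal_mul[OF Iid r x(1)] .
    moreover have "r * y = h * (r * x) / \<alpha>" using x by simp
    ultimately show "r * y \<in> K" unfolding K_def by blast
  qed
  have "h = h * \<alpha> / \<alpha>" using \<alpha>(2) by simp
  then have hK: "h \<in> K" unfolding K_def using \<alpha>(1) by blast
  have "sc \<alpha> K = sc h I" unfolding sc_def K_def image_image using \<alpha>(2) by simp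
  then have "ideal_equiv d I K" unfolding equiv_sc using \<alpha>OK hOK \<alpha>(2) h0 by blast
  then show ?thesis using Kid hK unfolding h_def by blast
qed

definition cb :: "complex \<Rightarrow> int" where "cb x = \<lfloor>Im x / Im w\<rfloor>"
definition ca :: "complex \<Rightarrow> int" where "ca x = \<lfloor>Re x - of_int (cb x) * Re w\<rfloor>"

lemma cb_mk: "cb (mk a b) = b" using Im_w_pos by (simp add: cb_def Im_mk)
lemma ca_mk: "ca (mk a b) = a" by (simp add: ca_def cb_mk) (simp add: mk_def)

definition red :: "int \<Rightarrow> complex \<Rightarrow> complex" where
  "red H x = mk (ca x mod H) (cb x mod H)"

lemma red_in:
  assumes K: "is_ideal d K" and H: "of_int H \<in> K" and x: "x \<in> OK d"
  shows "x \<in> K \<longleftrightarrow> red H x \<in> K"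
proof -
  obtain a b where ab: "x = mk a b" using x by (auto simp: in_OK)
  have e1: "a - a mod H = H * (a div H)" "b - b mod H = H * (b div H)" by (simp_all add: minus_mod_eq_mult_div)
  have "x - red H x = mk (a - a mod H) (b - b mod H)"
    unfolding ab red_def ca_mk cb_mk by (simp add: mk_diff)
  also have "\<dots> = of_int H * mk (a div H) (b div H)" unfolding e1 mk_def by (simp add: algebra_simps)
  finally have "x - red H x = of_int H * mk (a div H) (b div H)" .
  moreover have "of_int H * mk (a div H) (b div H) \<in> K" using ideal_mul'[OF K mk_in H] by (simp add: mult.commute)
  ultimately have dK: "x - red H x \<in> K" by simp
  show ?thesis
  proof
    assume "x \<in> K" then have "x - (x - red H x) \<in> K" using ideal_diff[OF K _ dK] by blast
    then show "red H x \<in> K" by simp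
  next
    assume "red H x \<in> K" then have "x - red H x + red H x \<in> K" using ideal_add[OF K dK] by blast
    then show "x \<in> K" by simp
  qed
qed

lemma fin_ideals:
  assumes H: "H > 0"
  shows "finite {K. is_ideal d K \<and> of_int H \<in> K}"
proof -
  define B where "B = (\<lambda>(a,b). mk a b) ` ({0..<H} \<times> {0..<H})"
  have fB: "finite B" unfolding B_def by simp
  have redB: "red H x \<in> B" for x unfolding red_def B_def using H by auto
  define F where "F S = {x \<in> OK d. red H x \<in> S}" for S
  have "{K. is_ideal d K \<and> of_int H \<in> K} \<subseteq> F ` Pow B"
  proof
    fix K assume "K \<in> {K. is_ideal d K \<and> of_int H \<in> K}"
    then have K: "is_ideal d K" "of_int H \<in> K" by auto
    have "K = F (K \<inter> B)"
      unfolding F_def using red_in[OF K] redB ideal_sub[OF K(1)] by blast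
    then show "K \<in> F ` Pow B" by blast
  qed
  then show ?thesis using fB by (meson finite_Pow_iff finite_imageI finite_subset)
qed

lemma finite_G: "finite (carrier G)"
proof -
  define H where "H = int (fact QQ)"
  have H0: "H > 0" unfolding H_def by simp
  have "carrier G \<subseteq> ideal_class d ` {K. is_ideal d K \<and> of_int H \<in> K}"
  proof
    fix X assume "X \<in> carrier G"
    then obtain I where I: "nz_ideal d I" "X = ideal_class d I" by (metis carrier_E)
    obtain K where K: "is_ideal d K" "of_nat (fact QQ) \<in> K" "ideal_equiv d I K" using reduce[OF I(1)] by blast
    have KH: "of_int H \<in> K" using K(2) unfolding H_def by simp
    have "nz_ideal d K" using nz_idealI[OF K(1) KH] H0 by simp
    then have "X = ideal_class d K" using class_eq I K by blast
    then show "X \<in> ideal_class d ` {K. is_ideal d K \<and> of_int H \<in> K}" using K KH by blast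
  qed
  then show ?thesis using fin_ideals[OF H0] by (meson finite_imageI finite_subset)
qed

end

context qf begin

definition ipow :: "complex set \<Rightarrow> nat \<Rightarrow> complex set" where
  "ipow I n = (ideal_mult d I ^^ n) (OK d)"

lemma ipow_0[simp]: "ipow I 0 = OK d" by (simp add: ipow_def)
lemma ipow_Suc: "ipow I (Suc n) = ideal_mult d I (ipow I n)" by (simp add: ipow_def)

lemma ipow_ideal: "I \<subseteq> OK d \<Longrightarrow> is_ideal d (ipow I n)"
proof (induction n)
  case (Suc n) then show ?case unfolding ipow_Suc using ideal_mult_ideal ideal_sub by blast
qed (simp add: is_ideal_OK)

lemma ipow_sub: "I \<subseteq> OK d \<Longrightarrow> ipow I n \<subseteq> OK d"
  using ipow_ideal ideal_sub by blast

lemma ipow_nz: "nz_ideal d I \<Longrightarrow> nz_ideal d (ipow I n)"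
  by (induction n) (auto simp: ipow_Suc nz_OK intro: nz_mult)

lemma swap4:
  assumes "A \<subseteq> OK d" "B \<subseteq> OK d" "C \<subseteq> OK d" "D \<subseteq> OK d"
  shows "ideal_mult d (ideal_mult d A B) (ideal_mult d C D) = ideal_mult d (ideal_mult d A C) (ideal_mult d B D)"
proof -
  have s: "\<And>X Y. X \<subseteq> OK d \<Longrightarrow> Y \<subseteq> OK d \<Longrightarrow> ideal_mult d X Y \<subseteq> OK d" by (rule ideal_mult_sub_OK)
  have "ideal_mult d (ideal_mult d A B) (ideal_mult d C D) = ideal_mult d A (ideal_mult d B (ideal_mult d C D))"
    using assms s by (simp add: ideal_mult_assoc)
  also have "ideal_mult d B (ideal_mult d C D) = ideal_mult d (ideal_mult d B C) D"
    using assms s by (simp add: ideal_mult_assoc)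
  also have "ideal_mult d B C = ideal_mult d C B" by (rule ideal_mult_comm)
  also have "ideal_mult d (ideal_mult d C B) D = ideal_mult d C (ideal_mult d B D)"
    using assms s by (simp add: ideal_mult_assoc)
  also have "ideal_mult d A (ideal_mult d C (ideal_mult d B D)) = ideal_mult d (ideal_mult d A C) (ideal_mult d B D)"
    using assms s by (simp add: ideal_mult_assoc)
  finally show ?thesis .
qed

lemma ipow_mult:
  assumes "A \<subseteq> OK d" "B \<subseteq> OK d"
  shows "ipow (ideal_mult d A B) n = ideal_mult d (ipow A n) (ipow B n)"
proof (induction n)
  case 0 show ?case using ideal_mult_OK[OF is_ideal_OK] by simp
next
  case (Suc n)
  show ?case unfolding ipow_Suc Suc
    using swap4[OF assms ipow_sub[OF assms(1)] ipow_sub[OF assms(2)]] by simp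
qed

lemma conj_ipow: "I \<subseteq> OK d \<Longrightarrow> conj_ideal (ipow I n) = ipow (conj_ideal I) n"
  by (induction n) (simp_all add: conj_OK ipow_Suc conj_ideal_mult ipow_sub)

lemma sc_OK_mult: "a \<in> OK d \<Longrightarrow> b \<in> OK d \<Longrightarrow> ideal_mult d (sc a (OK d)) (sc b (OK d)) = sc (a * b) (OK d)"
proof -
  assume a: "a \<in> OK d" and b: "b \<in> OK d"
  have "ideal_mult d (sc a (OK d)) (sc b (OK d)) = sc a (ideal_mult d (OK d) (sc b (OK d)))"
    using ideal_mult_sc[OF subset_refl sc_sub[OF subset_refl b] a] .
  also have "ideal_mult d (OK d) (sc b (OK d)) = sc b (OK d)"
    using ideal_mult_OK[OF sc_ideal[OF is_ideal_OK b]] .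
  finally show ?thesis by (simp add: sc_sc)
qed

lemma OK_pow: "a \<in> OK d \<Longrightarrow> a ^ n \<in> OK d"
  by (induction n) (auto intro: OK_mult OK_1)

lemma ipow_sc: "a \<in> OK d \<Longrightarrow> ipow (sc a (OK d)) n = sc (a ^ n) (OK d)"
proof (induction n)
  case 0 then show ?case by (simp add: sc_1)
next
  case (Suc n)
  then show ?case unfolding ipow_Suc Suc.IH[OF Suc.prems]
    using sc_OK_mult[OF Suc.prems OK_pow[OF Suc.prems, of n]] by simp
qed

lemma sc_inj: "a \<noteq> 0 \<Longrightarrow> sc a A = sc a B \<Longrightarrow> A = B"
proof -
  assume a: "a \<noteq> 0" and e: "sc a A = sc a B"
  have "inj (\<lambda>x. a * x)" using a by (auto simp: inj_on_def)
  then show "A = B" using e unfolding sc_def by (simp add: inj_image_eq_iff)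
qed

lemma prime_prod:
  assumes P: "prime_ideal d P" and A: "A \<subseteq> OK d" and B: "B \<subseteq> OK d"
    and AB: "ideal_mult d A B \<subseteq> P"
  shows "A \<subseteq> P \<or> B \<subseteq> P"
proof (rule ccontr)
  assume "\<not> (A \<subseteq> P \<or> B \<subseteq> P)"
  then obtain x y where "x \<in> A" "x \<notin> P" "y \<in> B" "y \<notin> P" by blast
  moreover have "x * y \<in> P" using AB prod_in calculation by blast
  ultimately show False using P A B unfolding prime_ideal_def by blast
qed

lemma prime_pow:
  assumes P: "prime_ideal d P" and A: "A \<subseteq> OK d"
  shows "ipow A (Suc n) \<subseteq> P \<Longrightarrow> A \<subseteq> P"
proof (induction n)
  have POK: "P \<noteq> OK d" "P \<subseteq> OK d" using P unfolding prime_ideal_def nz_ideal_def is_ideal_def by auto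
  case 0
  then have "ideal_mult d A (OK d) \<subseteq> P" by (simp add: ipow_Suc)
  then have "A \<subseteq> P \<or> OK d \<subseteq> P" using prime_prod[OF P A subset_refl] by blast
  then show ?case using POK by blast
next
  case (Suc n)
  then have "ideal_mult d A (ipow A (Suc n)) \<subseteq> P" by (simp add: ipow_Suc)
  then show ?case using prime_prod[OF P A ipow_sub[OF A]] Suc.IH by blast
qed

lemma class_pow:
  assumes I: "nz_ideal d I"
  shows "ideal_class d I [^]\<^bsub>G\<^esub> (n::nat) = ideal_class d (ipow I n)"
proof (induction n)
  case 0 show ?case by (simp add: one_G)
next
  case (Suc n)
  have "ideal_class d I [^]\<^bsub>G\<^esub> Suc n = ideal_class d (ipow I n) \<otimes>\<^bsub>G\<^esub> ideal_class d I"
    using Suc by simp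
  also have "\<dots> = ideal_class d (ideal_mult d (ipow I n) I)" using mult_class ipow_nz I by blast
  finally show ?case by (simp add: ipow_Suc ideal_mult_comm)
qed

end

context qf begin

lemma bc_eq: "ideal_mult d I (conj_ideal I) = principal_ideal d (of_nat p) \<Longrightarrow> is_ideal d I \<Longrightarrow> of_nat p \<in> I"
proof -
  assume e: "ideal_mult d I (conj_ideal I) = principal_ideal d (of_nat p)" and I: "is_ideal d I"
  have "of_nat p \<in> principal_ideal d (of_nat p)" unfolding principal_ideal_def using OK_1 by force
  then have "of_nat p \<in> ideal_mult d I (conj_ideal I)" using e by simp
  then show ?thesis using ideal_mult_sub1[OF I conj_sub[OF ideal_sub[OF I]]] by blast
qed

lemma key_distinct:
  fixes pa pb l :: nat
  assumes l: "l > 0"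
    and Pa: "prime_ideal d Pa" and Pb: "prime_ideal d Pb"
    and ci: "Pa \<noteq> conj_ideal Pa"
    and ni: "ideal_mult d Pa (conj_ideal Pa) = principal_ideal d (of_nat pa)"
    and nj: "ideal_mult d Pb (conj_ideal Pb) = principal_ideal d (of_nat pb)"
    and cop: "coprime pa pb" and pos: "pa > 0" "pb > 0"
    and bound: "real ((pa * pb)^l) < real_of_int d / 4"
    and eq: "(ideal_class d Pa \<otimes>\<^bsub>G\<^esub> ideal_class d (conj_ideal Pb)) [^]\<^bsub>G\<^esub> l = \<one>\<^bsub>G\<^esub>"
  shows False
proof -
  have nzi: "nz_ideal d Pa" and nzj: "nz_ideal d Pb" using Pa Pb by (auto simp: prime_ideal_def)
  have Pai: "is_ideal d Pa" and Pbi: "is_ideal d Pb" using nzi nzj nz_ideal_is by auto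
  have OKi: "Pa \<subseteq> OK d" and OKj: "Pb \<subseteq> OK d" using nzi nzj nz_sub by auto
  have cOKi: "conj_ideal Pa \<subseteq> OK d" and cOKj: "conj_ideal Pb \<subseteq> OK d" using OKi OKj conj_sub by auto
  define J where "J = ideal_mult d Pa (conj_ideal Pb)"
  have nzJ: "nz_ideal d J" unfolding J_def using nzi nz_conj[OF nzj] by (rule nz_mult)
  have JOK: "J \<subseteq> OK d" using nzJ nz_sub by blast
  have "ideal_class d (ipow J l) = ideal_class d (OK d)"
    using eq class_pow[OF nzJ] mult_class[OF nzi nz_conj[OF nzj]] one_G unfolding J_def by simp
  then have "ideal_equiv d (ipow J l) (OK d)" using class_eq ipow_nz[OF nzJ] nz_OK by blast
  then obtain \<alpha> \<beta> where ab: "\<alpha> \<in> OK d" "\<beta> \<in> OK d" "\<alpha> \<noteq> 0" "\<beta> \<noteq> 0" "sc \<alpha> (ipow J l) = sc \<beta> (OK d)"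
    unfolding equiv_sc by blast
  have "\<beta> \<in> sc \<beta> (OK d)" unfolding sc_def using OK_1 by force
  then obtain \<gamma> where g: "\<gamma> \<in> ipow J l" "\<beta> = \<alpha> * \<gamma>" using ab(5) unfolding sc_def by auto
  have gOK: "\<gamma> \<in> OK d" using g(1) ipow_sub[OF JOK] by blast
  have "sc \<alpha> (ipow J l) = sc \<alpha> (sc \<gamma> (OK d))" using ab(5) g(2) by (simp add: sc_sc)
  then have Jl: "ipow J l = sc \<gamma> (OK d)" using sc_inj ab(3) by blast
  have cJ: "conj_ideal J = ideal_mult d (conj_ideal Pa) Pb"
    unfolding J_def using conj_ideal_mult[OF OKi cOKj] by (simp add: conj_conj)
  define N :: complex where "N = of_nat pa * of_nat pb"
  have NOK: "N \<in> OK d" unfolding N_def using OK_mult OK_nat by blast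
  have "ideal_mult d J (conj_ideal J) = ideal_mult d (ideal_mult d Pa (conj_ideal Pa)) (ideal_mult d (conj_ideal Pb) Pb)"
    using swap4[OF OKi cOKj cOKi OKj] unfolding cJ by (simp only: J_def)
  also have "\<dots> = ideal_mult d (sc (of_nat pa) (OK d)) (sc (of_nat pb) (OK d))"
    using ni nj by (simp add: ideal_mult_comm[of "conj_ideal Pb"] principal_sc)
  also have "\<dots> = sc N (OK d)" unfolding N_def using sc_OK_mult OK_nat by blast
  finally have JcJ: "ideal_mult d J (conj_ideal J) = sc N (OK d)" .
  have "ipow (ideal_mult d J (conj_ideal J)) l = ideal_mult d (ipow J l) (ipow (conj_ideal J) l)"
    using ipow_mult[OF JOK conj_sub[OF JOK]] .
  also have "ipow (conj_ideal J) l = conj_ideal (ipow J l)" using conj_ipow[OF JOK] by simp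
  also have "\<dots> = sc (cnj \<gamma>) (OK d)" unfolding Jl conj_sc conj_OK ..
  finally have "ipow (ideal_mult d J (conj_ideal J)) l = sc (\<gamma> * cnj \<gamma>) (OK d)"
    unfolding Jl using sc_OK_mult[OF gOK OK_cnj[OF gOK]] by simp
  moreover have "ipow (ideal_mult d J (conj_ideal J)) l = sc (N ^ l) (OK d)"
    unfolding JcJ using ipow_sc[OF NOK] .
  ultimately have scg: "sc (\<gamma> * cnj \<gamma>) (OK d) = sc (N ^ l) (OK d)" by simp
  have "N ^ l \<in> sc (N ^ l) (OK d)" unfolding sc_def using OK_1 by force
  then obtain r where r: "r \<in> OK d" "N ^ l = \<gamma> * cnj \<gamma> * r" using scg unfolding sc_def by auto
  define Nr where "Nr = real ((pa * pb)^l)"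
  have NrN: "N ^ l = of_real Nr" unfolding Nr_def N_def by simp
  have Nr0: "Nr > 0" unfolding Nr_def using pos by simp
  have gg: "\<gamma> * cnj \<gamma> = of_real ((cmod \<gamma>)^2)" by (metis complex_norm_square of_real_power)
  have g0: "\<gamma> \<noteq> 0" using r(2) NrN Nr0 by auto
  have c0: "(cmod \<gamma>)^2 > 0" using g0 by simp
  have "r = of_real (Nr / (cmod \<gamma>)^2)" using r(2) NrN gg c0
    by (simp add: field_simps)
  then have "Im r = 0" by simp
  then obtain a where a: "r = of_int a" using OK_real r(1) by blast
  have "of_real Nr = (of_real ((cmod \<gamma>)^2 * of_int a) :: complex)" using r(2) NrN gg a by simp
  then have Nra: "Nr = (cmod \<gamma>)^2 * of_int a" using of_real_eq_iff by blast
  then have "a > 0" using Nr0 c0 by (simp add: zero_less_mult_iff)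
  then have "(cmod \<gamma>)^2 \<le> Nr" using Nra c0 by (simp add: mult_le_cancel_left1)
  then have cg: "(cmod \<gamma>)^2 < real_of_int d / 4" using bound unfolding Nr_def by simp
  obtain a0 b0 where ab0: "\<gamma> = mk a0 b0" using gOK by (auto simp: in_OK)
  have "b0 = 0"
  proof (rule ccontr)
    assume "b0 \<noteq> 0"
    then have "1 \<le> \<bar>b0\<bar>" by simp
    then have "1 * 1 \<le> \<bar>b0\<bar> * \<bar>b0\<bar>" by (intro mult_mono) auto
    then have b1: "1 \<le> (real_of_int b0)^2" by (simp add: power2_eq_square abs_mult_self_eq flip: of_int_mult)
    have "(Im \<gamma>)^2 \<le> (cmod \<gamma>)^2" by (simp add: cmod_power2)
    moreover have "(Im \<gamma>)^2 = (real_of_int b0)^2 * (Im w * Im w)" unfolding ab0 Im_mk by (simp add: power2_eq_square)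
    moreover have "1 * (Im w * Im w) \<le> (real_of_int b0)^2 * (Im w * Im w)" using b1 by (intro mult_right_mono) auto
    ultimately have "Im w * Im w \<le> (cmod \<gamma>)^2" by linarith
    then show False using Im_w_sq cg by linarith
  qed
  then have gr: "cnj \<gamma> = \<gamma>" unfolding ab0 by (simp add: mk_def)
  have cJl: "conj_ideal (ipow J l) = ipow J l" unfolding Jl conj_sc conj_OK gr ..
  obtain l' where l': "l = Suc l'" using l by (cases l) auto
  have "ipow J l \<subseteq> J" unfolding l' ipow_Suc using ideal_mult_sub1[OF nz_ideal_is[OF nzJ] ipow_sub[OF JOK]] .
  also have "J \<subseteq> Pa" unfolding J_def using ideal_mult_sub1[OF Pai cOKj] .
  finally have "ipow (conj_ideal J) l \<subseteq> Pa" using conj_ipow[OF JOK] cJl by simp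
  then have "conj_ideal J \<subseteq> Pa" unfolding l' using prime_pow[OF Pa conj_sub[OF JOK]] by blast
  then have "conj_ideal Pa \<subseteq> Pa \<or> Pb \<subseteq> Pa" unfolding cJ using prime_prod[OF Pa cOKi OKj] by blast
  then show False
  proof
    assume "conj_ideal Pa \<subseteq> Pa"
    then have "Pa \<subseteq> conj_ideal Pa" using conj_mono conj_conj by metis
    then show False using \<open>conj_ideal Pa \<subseteq> Pa\<close> ci by blast
  next
    assume ba: "Pb \<subseteq> Pa"
    have "of_nat pb \<in> Pa" using bc_eq[OF nj Pbi] ba by blast
    moreover have "of_nat pa \<in> Pa" using bc_eq[OF ni Pai] .
    moreover obtain u v :: int where uv: "u * int pa + v * int pb = 1"
      using bezout_int[of "int pa" "int pb"] cop by (metis coprime_int_iff gcd_int_int_eq coprime_iff_gcd_eq_1)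
    ultimately have "of_int u * of_nat pa + of_int v * of_nat pb \<in> Pa"
      using ideal_add[OF Pai] ideal_int_mul[OF Pai] by blast
    moreover have "of_int u * of_nat pa + of_int v * of_nat pb = (1::complex)"
      using arg_cong[OF uv, of "of_int :: int \<Rightarrow> complex"] by simp
    ultimately have "1 \<in> Pa" by simp
    have "OK d \<subseteq> Pa"
    proof
      fix z assume "z \<in> OK d"
      then have "z * 1 \<in> Pa" using ideal_mul[OF Pai _ \<open>1 \<in> Pa\<close>] by blast
      then show "z \<in> Pa" by simp
    qed
    then show False using Pa OKi unfolding prime_ideal_def by blast
  qed
qed

end

lemma bound_lemma:
  fixes d :: int and l pa pb :: nat
  assumes d: "d > 1" and l: "l > 0"
    and a: "real pa < real_of_int d powr (1 / (2 * real l)) / 4"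
    and b: "real pb < real_of_int d powr (1 / (2 * real l)) / 4"
  shows "real ((pa * pb)^l) < real_of_int d / 4"
proof -
  define D where "D = real_of_int d powr (1 / (2 * real l))"
  have D0: "D > 0" unfolding D_def using d by simp
  have "real pa * real pb < (D/4) * (D/4)" using a b unfolding D_def[symmetric]
    by (intro mult_strict_mono) auto
  then have "(real pa * real pb)^l < ((D/4) * (D/4))^l" using l by (intro power_strict_mono) auto
  also have "((D/4) * (D/4))^l = D^(2*l) / 16^l"
    by (simp add: power_mult_distrib power_divide power_mult power2_eq_square[symmetric] field_simps)
       (simp add: power_mult[symmetric] mult.commute)
  also have "D^(2*l) = real_of_int d"
  proof -
    have "D^(2*l) = D powr real (2*l)" using powr_realpow[OF D0, of "2*l"] by simp
    also have "\<dots> = real_of_int d powr (1 / (2 * real l) * real (2*l))" unfolding D_def by (simp add: powr_powr)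
    also have "\<dots> = real_of_int d" using l d by simp
    finally show ?thesis .
  qed
  also have "real_of_int d / 16^l \<le> real_of_int d / 4"
  proof -
    have "(16::real)^1 \<le> 16^l" using l by (intro power_increasing) auto
    then show ?thesis using d by (intro divide_left_mono) auto
  qed
  finally show ?thesis by simp
qed

theorem mainTheorem1:
  fixes d :: int and l M :: nat and p :: "nat \<Rightarrow> nat" and P :: "nat \<Rightarrow> complex set"
  assumes "d > 1" and "squarefree d"
    and "prime l" and "odd l"
    and "inj_on p {..<M}"
    and "\<And>j. j < M \<Longrightarrow> prime (p j)"
    and "\<And>j. j < M \<Longrightarrow> \<not> int (p j) dvd 2 * d"
    and "\<And>j. j < M \<Longrightarrow> real (p j) < real_of_int d powr (1 / (2 * real l)) / 4"
    and "\<And>j. j < M \<Longrightarrow> prime_ideal d (P j)"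
    and "\<And>j. j < M \<Longrightarrow> P j \<noteq> conj_ideal (P j)"
    and "\<And>j. j < M \<Longrightarrow> ideal_mult d (P j) (conj_ideal (P j)) = principal_ideal d (of_nat (p j))"
  shows "(\<forall>i<M. \<forall>j<M. i \<noteq> j \<longrightarrow>
            torsion d l #>\<^bsub>class_group d\<^esub> ideal_class d (P i)
            \<noteq> torsion d l #>\<^bsub>class_group d\<^esub> ideal_class d (P j))
       \<and> card (torsion d l) * M \<le> card (carrier (class_group d))"
proof -
  interpret qf d using assms(1,2) by unfold_locales
  interpret grp: comm_group "class_group d" by (rule G_comm_group)
  have fin: "finite (carrier (class_group d))" by (rule finite_G)
  define H where "H = torsion d l"
  have l0: "l > 0" using assms(3) prime_gt_0_nat by blast
  have sub: "subgroup H (class_group d)"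
  proof (rule grp.subgroupI)
    show "H \<subseteq> carrier (class_group d)" unfolding H_def torsion_def by blast
    show "H \<noteq> {}" unfolding H_def torsion_def by auto
  next
    fix x assume "x \<in> H"
    then have x: "x \<in> carrier (class_group d)" "x [^]\<^bsub>class_group d\<^esub> l = \<one>\<^bsub>class_group d\<^esub>"
      unfolding H_def torsion_def by auto
    then show "inv\<^bsub>class_group d\<^esub> x \<in> H" unfolding H_def torsion_def
      using grp.nat_pow_inv[OF x(1)] by simp
  next
    fix x y assume "x \<in> H" "y \<in> H"
    then show "x \<otimes>\<^bsub>class_group d\<^esub> y \<in> H" unfolding H_def torsion_def
      using grp.nat_pow_distrib by auto
  qed
  have nzP: "nz_ideal d (P j)" if "j < M" for j using assms(9)[OF that] by (simp add: prime_ideal_def)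
  have cP: "ideal_class d (P j) \<in> carrier (class_group d)" if "j < M" for j using class_in[OF nzP[OF that]] .
  have dist: "\<forall>i<M. \<forall>j<M. i \<noteq> j \<longrightarrow> H #>\<^bsub>class_group d\<^esub> ideal_class d (P i) \<noteq> H #>\<^bsub>class_group d\<^esub> ideal_class d (P j)"
  proof (intro allI impI notI)
    fix i j assume ij: "i < M" "j < M" "i \<noteq> j"
      and eq: "H #>\<^bsub>class_group d\<^esub> ideal_class d (P i) = H #>\<^bsub>class_group d\<^esub> ideal_class d (P j)"
    define a where "a = ideal_class d (P i)"
    define b where "b = ideal_class d (P j)"
    define b' where "b' = ideal_class d (conj_ideal (P j))"
    have a: "a \<in> carrier (class_group d)" unfolding a_def using cP[OF ij(1)] .
    have b: "b \<in> carrier (class_group d)" unfolding b_def using cP[OF ij(2)] .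
    have b': "b' \<in> carrier (class_group d)" unfolding b'_def using class_in[OF nz_conj[OF nzP[OF ij(2)]]] .
    have "a \<in> H #>\<^bsub>class_group d\<^esub> a" using grp.rcos_self[OF a sub] .
    then have "a \<in> H #>\<^bsub>class_group d\<^esub> b" using eq unfolding a_def b_def by simp
    then obtain h where h: "h \<in> H" "a = h \<otimes>\<^bsub>class_group d\<^esub> b" unfolding r_coset_def by blast
    have hc: "h \<in> carrier (class_group d)" using subgroup.mem_carrier[OF sub h(1)] .
    have "b \<otimes>\<^bsub>class_group d\<^esub> b' = ideal_class d (ideal_mult d (P j) (conj_ideal (P j)))"
      unfolding b_def b'_def using mult_class[OF nzP[OF ij(2)] nz_conj[OF nzP[OF ij(2)]]] .
    also have "\<dots> = ideal_class d (OK d)"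
    proof -
      have "ideal_mult d (P j) (conj_ideal (P j)) = sc (of_nat (p j)) (OK d)"
        using assms(11)[OF ij(2)] by (simp add: principal_sc)
      moreover have "of_nat (p j) \<noteq> (0::complex)" using assms(6)[OF ij(2)] by (simp add: prime_gt_0_nat)
      ultimately have "ideal_equiv d (ideal_mult d (P j) (conj_ideal (P j))) (OK d)"
        using equiv_sc_self[OF OK_nat] by simp
      then show ?thesis using class_eq[OF nz_mult[OF nzP[OF ij(2)] nz_conj[OF nzP[OF ij(2)]]] nz_OK] by blast
    qed
    finally have bb: "b \<otimes>\<^bsub>class_group d\<^esub> b' = \<one>\<^bsub>class_group d\<^esub>" using one_G by simp
    have "a \<otimes>\<^bsub>class_group d\<^esub> b' = (h \<otimes>\<^bsub>class_group d\<^esub> b) \<otimes>\<^bsub>class_group d\<^esub> b'"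
      using h(2) by simp
    also have "\<dots> = h \<otimes>\<^bsub>class_group d\<^esub> (b \<otimes>\<^bsub>class_group d\<^esub> b')" using grp.m_assoc[OF hc b b'] .
    also have "\<dots> = h" using bb grp.r_one[OF hc] by simp
    finally have ah: "a \<otimes>\<^bsub>class_group d\<^esub> b' = h" .
    have "h [^]\<^bsub>class_group d\<^esub> l = \<one>\<^bsub>class_group d\<^esub>" using h(1) unfolding H_def torsion_def by blast
    then have eqp: "(ideal_class d (P i) \<otimes>\<^bsub>class_group d\<^esub> ideal_class d (conj_ideal (P j))) [^]\<^bsub>class_group d\<^esub> l = \<one>\<^bsub>class_group d\<^esub>"
      using ah unfolding a_def b'_def by simp
    have ne: "p i \<noteq> p j"
    proof
      assume "p i = p j"
      then have "i = j" using inj_onD[OF assms(5)] ij by simp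
      then show False using ij by simp
    qed
    have cop: "coprime (p i) (p j)" using primes_coprime[OF assms(6)[OF ij(1)] assms(6)[OF ij(2)] ne] .
    have pos: "p i > 0" "p j > 0" using prime_gt_0_nat assms(6) ij by blast+
    have bnd: "real ((p i * p j)^l) < real_of_int d / 4"
      using bound_lemma[OF assms(1) l0 assms(8)[OF ij(1)] assms(8)[OF ij(2)]] .
    show False
      using key_distinct[OF l0 assms(9)[OF ij(1)] assms(9)[OF ij(2)] assms(10)[OF ij(1)]
          assms(11)[OF ij(1)] assms(11)[OF ij(2)] cop pos bnd eqp] .
  qed
  define f where "f i = H #>\<^bsub>class_group d\<^esub> ideal_class d (P i)" for i
  have inj: "inj_on f {..<M}"
  proof (rule inj_onI)
    fix x y assume "x \<in> {..<M}" "y \<in> {..<M}" "f x = f y"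
    then show "x = y" using dist unfolding f_def by blast
  qed
  have fR: "f ` {..<M} \<subseteq> rcosets\<^bsub>class_group d\<^esub> H"
    unfolding f_def RCOSETS_def using cP by blast
  have finR: "finite (rcosets\<^bsub>class_group d\<^esub> H)"
    using finite_subset[OF grp.rcosets_subset_PowG[OF sub]] fin by simp
  have "M \<le> card (rcosets\<^bsub>class_group d\<^esub> H)"
    using card_inj_on_le[OF inj fR finR] by simp
  then have "card H * M \<le> card H * card (rcosets\<^bsub>class_group d\<^esub> H)" by simp
  also have "\<dots> = card (carrier (class_group d))"
    using grp.lagrange[OF sub] by (simp add: order_def mult.commute)
  finally have "card H * M \<le> card (carrier (class_group d))" .
  then show ?thesis using dist unfolding H_def by (intro conjI)
qed

end
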